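(* Let $G$ be a graph and $v\in V(G)$ with $d_G(v)\le 2$. Then $\mathbf{a}_4(G)\ge \mathbf{a}_4(G-v)$.
   Context: Graphs are finite and simple. $\mathbf{a}_4(H)$ is the coefficient of $\lambda^{\nu(H)-4}$ in $\det(\lambda\mathbf{I}-\mathbf{A}(H))$, where $\nu(H)$ is the number of vertices; equivalently, $\mathbf{a}_4(H)$ is the number of 2-matchings of $H$ minus twice the number of 4-cycles of $H$. $G-v$ is the graph obtained by deleting $v$ and its incident edges. *)

theory Defs
  imports Main
begin

definition simple_graph :: "'a set \<Rightarrow> 'a set set \<Rightarrow> bool" where
  "simple_graph V E \<longleftrightarrow> finite V \<and> (\<forall>e\<in>E. e \<subseteq> V \<and> card e = 2)"

definition degree :: "'a set set \<Rightarrow> 'a \<Rightarrow> nat" where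
  "degree E v = card {e \<in> E. v \<in> e}"

definition del_vertex_V :: "'a set \<Rightarrow> 'a \<Rightarrow> 'a set" where
  "del_vertex_V V v = V - {v}"

definition del_vertex_E :: "'a set set \<Rightarrow> 'a \<Rightarrow> 'a set set" where
  "del_vertex_E E v = {e \<in> E. v \<notin> e}"

definition two_matchings :: "'a set set \<Rightarrow> 'a set set set" where
  "two_matchings E = {{e, f} | e f. e \<in> E \<and> f \<in> E \<and> e \<inter> f = {}}"

definition four_cycles :: "'a set set \<Rightarrow> 'a set set set" where
  "four_cycles E = {{{a, b}, {b, c}, {c, d}, {d, a}} | a b c d.
      distinct [a, b, c, d] \<and> {a, b} \<in> E \<and> {b, c} \<in> E \<and> {c, d} \<in> E \<and> {d, a} \<in> E}"

definition a4 :: "'a set set \<Rightarrow> int" where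
  "a4 E = int (card (two_matchings E)) - 2 * int (card (four_cycles E))"

end

theory Submission
  imports Defs
begin

lemma cyc_rot: "{{a, b::'a}, {b, c}, {c, d}, {d, a}} = {{b, c}, {c, d}, {d, a}, {a, b}}"
  by auto

lemma cyc_in_image:
  assumes dist: "distinct [a, b, c, d]"
    and E: "{a, b} \<in> E" "{b, c} \<in> E" "{c, d} \<in> E" "{d, a} \<in> E"
    and va: "a = v"
    and Dv: "\<And>e. e \<in> E \<Longrightarrow> v \<in> e \<Longrightarrow> e = {v,u} \<or> e = {v,w}"
    and uw: "u \<noteq> w"
  shows "{{a, b}, {b, c}, {c, d}, {d, a}} \<in>
     (\<lambda>x. {{v,u},{u,x},{x,w},{w,v}}) ` {x. x \<noteq> v \<and> x \<noteq> u \<and> x \<noteq> w \<and> {u,x} \<in> E \<and> {x,w} \<in> E}"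
proof -
  have 1: "{v,b} = {v,u} \<or> {v,b} = {v,w}" using Dv[of "{a,b}"] E va by auto
  have 2: "{v,d} = {v,u} \<or> {v,d} = {v,w}" using Dv[of "{d,a}"] E va by (auto simp: insert_commute)
  have bu: "b = u \<or> b = w" using 1 dist va by (auto simp: doubleton_eq_iff)
  have du: "d = u \<or> d = w" using 2 dist va by (auto simp: doubleton_eq_iff)
  show ?thesis
  proof (cases "b = u")
    case True
    then have "d = w" using du dist by auto
    then show ?thesis using True dist E va
      by (intro image_eqI[where x=c]) (auto simp: insert_commute)
  next
    case False
    then have "b = w" "d = u" using bu du dist by auto
    then show ?thesis using dist E va
      by (intro image_eqI[where x=c]) (auto simp: insert_commute)
  qed
qed

theorem theorem4p3:
  fixes V :: "'a set" and E :: "'a set set" and v :: 'a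
  assumes "simple_graph V E" and "v \<in> V" and "degree E v \<le> 2"
  shows "a4 E \<ge> a4 (del_vertex_E E v)"
proof -
  define E' where "E' = del_vertex_E E v"
  have finV: "finite V" using assms(1) by (simp add: simple_graph_def)
  have "E \<subseteq> Pow V" using assms(1) by (auto simp: simple_graph_def)
  then have finE: "finite E" using finV by (meson finite_Pow_iff rev_finite_subset)
  have s1: "two_matchings E' \<subseteq> two_matchings E"
    unfolding two_matchings_def E'_def del_vertex_E_def by blast
  have s2: "four_cycles E' \<subseteq> four_cycles E"
    unfolding four_cycles_def E'_def del_vertex_E_def by blast
  have fTM: "finite (two_matchings E)"
    by (rule finite_subset[of _ "Pow E"]) (auto simp: two_matchings_def finE)
  have fFC: "finite (four_cycles E)"
    by (rule finite_subset[of _ "Pow E"]) (auto simp: four_cycles_def finE)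
  define M where "M = two_matchings E - two_matchings E'"
  define C where "C = four_cycles E - four_cycles E'"
  have cM: "card (two_matchings E) = card (two_matchings E') + card M"
    unfolding M_def using s1 fTM
    by (metis card_Diff_subset card_mono finite_subset le_add_diff_inverse)
  have cC: "card (four_cycles E) = card (four_cycles E') + card C"
    unfolding C_def using s2 fFC
    by (metis card_Diff_subset card_mono finite_subset le_add_diff_inverse)
  have main: "2 * card C \<le> card M"
  proof (cases "\<exists>u w. u \<noteq> w \<and> u \<noteq> v \<and> w \<noteq> v \<and> {v,u} \<in> E \<and> {v,w} \<in> E")
    case False
    have "C = {}"
    proof (rule ccontr)
      assume "C \<noteq> {}"
      then obtain Q where Q: "Q \<in> four_cycles E" "Q \<notin> four_cycles E'" unfolding C_def by auto
      then obtain a b c d where Qd: "Q = {{a, b}, {b, c}, {c, d}, {d, a}}" "distinct [a, b, c, d]"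
        "{a, b} \<in> E" "{b, c} \<in> E" "{c, d} \<in> E" "{d, a} \<in> E"
        unfolding four_cycles_def by blast
      have vcases: "v = a \<or> v = b \<or> v = c \<or> v = d"
      proof (rule ccontr)
        assume "\<not> ?thesis"
        then have "Q \<in> four_cycles E'" using Qd unfolding four_cycles_def E'_def del_vertex_E_def
          by blast
        then show False using Q by blast
      qed
      have nx: "\<And>p q. p = q \<or> p = v \<or> q = v \<or> {v,p} \<notin> E \<or> {v,q} \<notin> E"
        using False by blast
      have e1: "{b,a} \<in> E" "{c,b} \<in> E" "{d,c} \<in> E" "{a,d} \<in> E"
        using Qd(3-6) by (simp_all add: insert_commute)
      note vcases
      moreover have "v = a \<Longrightarrow> False" using nx[of b d] Qd(2-6) e1 by auto
      moreover have "v = b \<Longrightarrow> False" using nx[of a c] Qd(2-6) e1 by auto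
      moreover have "v = c \<Longrightarrow> False" using nx[of b d] Qd(2-6) e1 by auto
      moreover have "v = d \<Longrightarrow> False" using nx[of c a] Qd(2-6) e1 by auto
      ultimately show False by blast
    qed
    then show ?thesis by simp
  next
    case True
    then obtain u w where uw: "u \<noteq> w" "u \<noteq> v" "w \<noteq> v" "{v,u} \<in> E" "{v,w} \<in> E" by blast
    have Dsub: "{{v,u},{v,w}} \<subseteq> {e \<in> E. v \<in> e}" using uw by auto
    have "card {{v,u},{v,w}} = 2" using uw by (auto simp: doubleton_eq_iff)
    moreover have "finite {e \<in> E. v \<in> e}" using finE by auto
    ultimately have "{{v,u},{v,w}} = {e \<in> E. v \<in> e}"
      using Dsub assms(3) unfolding degree_def
      by (metis card_seteq)
    then have Dv: "\<And>e. e \<in> E \<Longrightarrow> v \<in> e \<Longrightarrow> e = {v,u} \<or> e = {v,w}" by blast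
    define X where "X = {x. x \<noteq> v \<and> x \<noteq> u \<and> x \<noteq> w \<and> {u,x} \<in> E \<and> {x,w} \<in> E}"
    have finX: "finite X"
    proof (rule finite_subset[of _ V])
      show "X \<subseteq> V" using assms(1) unfolding X_def simple_graph_def by blast
    qed (rule finV)
    have CX: "C \<subseteq> (\<lambda>x. {{v,u},{u,x},{x,w},{w,v}}) ` X"
    proof
      fix Q assume "Q \<in> C"
      then have Q: "Q \<in> four_cycles E" "Q \<notin> four_cycles E'" unfolding C_def by auto
      then obtain a b c d where Qd: "Q = {{a, b}, {b, c}, {c, d}, {d, a}}" "distinct [a, b, c, d]"
        "{a, b} \<in> E" "{b, c} \<in> E" "{c, d} \<in> E" "{d, a} \<in> E"
        unfolding four_cycles_def by blast
      have vcases: "v = a \<or> v = b \<or> v = c \<or> v = d"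
      proof (rule ccontr)
        assume "\<not> ?thesis"
        then have "Q \<in> four_cycles E'" using Qd unfolding four_cycles_def E'_def del_vertex_E_def
          by blast
        then show False using Q by blast
      qed
      have dd: "distinct [b,c,d,a]" "distinct [c,d,a,b]" "distinct [d,a,b,c]" using Qd(2) by auto
      have r1: "Q = {{b, c}, {c, d}, {d, a}, {a, b}}" using Qd(1) cyc_rot[of a b c d] by (rule trans)
      have r2: "Q = {{c, d}, {d, a}, {a, b}, {b, c}}" using r1 cyc_rot[of b c d a] by (rule trans)
      have r3: "Q = {{d, a}, {a, b}, {b, c}, {c, d}}" using r2 cyc_rot[of c d a b] by (rule trans)
      note X1 = X_def[symmetric]
      note vcases
      moreover have "v = a \<Longrightarrow> Q \<in> (\<lambda>x. {{v,u},{u,x},{x,w},{w,v}}) ` X"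
        using cyc_in_image[OF Qd(2) Qd(3-6) _ Dv uw(1)] unfolding X1 Qd(1) by simp
      moreover have "v = b \<Longrightarrow> Q \<in> (\<lambda>x. {{v,u},{u,x},{x,w},{w,v}}) ` X"
        using cyc_in_image[OF dd(1) Qd(4) Qd(5) Qd(6) Qd(3) _ Dv uw(1)] unfolding X1 r1 by simp
      moreover have "v = c \<Longrightarrow> Q \<in> (\<lambda>x. {{v,u},{u,x},{x,w},{w,v}}) ` X"
        using cyc_in_image[OF dd(2) Qd(5) Qd(6) Qd(3) Qd(4) _ Dv uw(1)] unfolding X1 r2 by simp
      moreover have "v = d \<Longrightarrow> Q \<in> (\<lambda>x. {{v,u},{u,x},{x,w},{w,v}}) ` X"
        using cyc_in_image[OF dd(3) Qd(6) Qd(3) Qd(4) Qd(5) _ Dv uw(1)] unfolding X1 r3 by simp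
      ultimately show "Q \<in> (\<lambda>x. {{v,u},{u,x},{x,w},{w,v}}) ` X" by blast
    qed
    have "card C \<le> card X"
      using card_mono[OF finite_imageI[OF finX] CX] card_image_le[OF finX, of "\<lambda>x. {{v,u},{u,x},{x,w},{w,v}}"] by linarith
    define f1 where "f1 = (\<lambda>x. {{v,u},{x,w}})"
    define f2 where "f2 = (\<lambda>x. {{v,w},{u,x}})"
    have Xp: "\<And>x. x \<in> X \<Longrightarrow> x \<noteq> v \<and> x \<noteq> u \<and> x \<noteq> w" unfolding X_def by simp
    have inj1: "inj_on f1 X"
    proof (rule inj_onI)
      fix x y assume xy: "x \<in> X" "y \<in> X" "f1 x = f1 y"
      have "{x,w} \<in> {{v,u},{y,w}}" using xy(3) unfolding f1_def by (metis insertCI)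
      moreover have "{x,w} \<noteq> {v,u}" using Xp[OF xy(1)] by (simp add: doubleton_eq_iff)
      ultimately have "{x,w} = {y,w}" by simp
      then show "x = y" using Xp[OF xy(1)] by (simp add: doubleton_eq_iff)
    qed
    have inj2: "inj_on f2 X"
    proof (rule inj_onI)
      fix x y assume xy: "x \<in> X" "y \<in> X" "f2 x = f2 y"
      have "{u,x} \<in> {{v,w},{u,y}}" using xy(3) unfolding f2_def by (metis insertCI)
      moreover have "{u,x} \<noteq> {v,w}" using Xp[OF xy(1)] uw by (simp add: doubleton_eq_iff)
      ultimately have "{u,x} = {u,y}" by simp
      then show "x = y" using Xp[OF xy(1)] by (simp add: doubleton_eq_iff)
    qed
    have disj: "f1 ` X \<inter> f2 ` X = {}"
    proof (rule ccontr)
      assume "f1 ` X \<inter> f2 ` X \<noteq> {}"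
      then obtain x y where xy: "x \<in> X" "y \<in> X" "f1 x = f2 y" by force
      have "{v,u} \<in> {{v,w},{u,y}}" using xy(3) unfolding f1_def f2_def by (metis insertCI)
      moreover have "{v,u} \<noteq> {v,w}" using uw by (simp add: doubleton_eq_iff)
      moreover have "{v,u} \<noteq> {u,y}" using Xp[OF xy(2)] uw by (auto simp add: doubleton_eq_iff)
      ultimately show False by simp
    qed
    have notE': "\<And>e f. {e, f} \<in> two_matchings E' \<Longrightarrow> v \<notin> e"
    proof -
      fix e f assume "{e, f} \<in> two_matchings E'"
      then have "\<exists>e' f'. {e,f} = {e',f'} \<and> e' \<in> E' \<and> f' \<in> E' \<and> e' \<inter> f' = {}"
        unfolding two_matchings_def mem_Collect_eq .
      then obtain e' f' where ef: "{e,f} = {e',f'}" "e' \<in> E'" "f' \<in> E'"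
        by (elim exE conjE) (rule that)
      have "e \<in> {e',f'}" using ef(1) by (metis insertCI)
      then have "e \<in> E'" using ef(2,3) by auto
      then show "v \<notin> e" unfolding E'_def del_vertex_E_def by simp
    qed
    have sub: "f1 ` X \<union> f2 ` X \<subseteq> M"
    proof
      fix m assume "m \<in> f1 ` X \<union> f2 ` X"
      then show "m \<in> M"
      proof
        assume "m \<in> f1 ` X"
        then obtain x where x: "x \<in> X" "m = {{v,u},{x,w}}" unfolding f1_def by auto
        have "{v,u} \<inter> {x,w} = {}" "{v,u} \<in> E" "{x,w} \<in> E" using x(1) uw unfolding X_def by auto
        then have "m \<in> two_matchings E" unfolding two_matchings_def x(2)
          by (intro CollectI exI[of _ "{v,u}"] exI[of _ "{x,w}"]) simp
        moreover have "m \<notin> two_matchings E'" using x notE'[of "{v,u}" "{x,w}"] by blast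
        ultimately show ?thesis unfolding M_def by blast
      next
        assume "m \<in> f2 ` X"
        then obtain x where x: "x \<in> X" "m = {{v,w},{u,x}}" unfolding f2_def by auto
        have "{v,w} \<inter> {u,x} = {}" "{v,w} \<in> E" "{u,x} \<in> E" using x(1) uw unfolding X_def by auto
        then have "m \<in> two_matchings E" unfolding two_matchings_def x(2)
          by (intro CollectI exI[of _ "{v,w}"] exI[of _ "{u,x}"]) simp
        moreover have "m \<notin> two_matchings E'" using x notE'[of "{v,w}" "{u,x}"] by blast
        ultimately show ?thesis unfolding M_def by blast
      qed
    qed
    have finM: "finite M" unfolding M_def using fTM by auto
    have "card (f1 ` X \<union> f2 ` X) = 2 * card X"
      using card_Un_disjoint[OF finite_imageI[OF finX] finite_imageI[OF finX] disj]
        card_image[OF inj1] card_image[OF inj2] by simp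
    then have "2 * card X \<le> card M" using card_mono[OF finM sub] by simp
    then show ?thesis using \<open>card C \<le> card X\<close> by linarith
  qed
  show ?thesis unfolding a4_def E'_def[symmetric] using cM cC main by simp
qed

end
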